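(* Let $D$ be a decorated tangle diagram and let $e$ and $f$ be two oriented edges lying on the same strand of $D$, with orientations compatible along that strand. Then the endomorphisms of $C(D)$ given by multiplication by $x_e$ and by $x_f$ are $1$-homotopic.
   Context: Conventions. All rings and modules are bigraded by an internal grading and a filtration grading; rings are concentrated in nonpositive even internal degree and filtration degree $0$. For a module $M$, $M\{i,j\}$ is $M$ with gradings shifted so that an element of bidegree $(a,b)$ in $M$ has bidegree $(a+i,b+j)$, and $M\{i\}=M\{i,0\}$; the internal grading is used for Koszul signs (a shift by an odd internal amount negates the differential). For a ring $R$ and homogeneous $w\in R$ of bidegree $(2k_0,0)$ with $k_0$ odd (here $k_0=-3$), a multifactorization of $w$ is an $R$-module $C$ with $R$-linear maps $d_i:C\to C$ ($i\ge0$) of bidegree $(k_0,i)$ such that $D=\sum_id_i$ satisfies $D^2=w$. A chain map is $F=\sum_{i\ge0}f_i$ with $f_i$ of bidegree $(0,i)$ and $FD=D'F$. An $n$-homotopy between chain maps $F,G$ is $H=\sum_{i\ge-n}h_i$ with $h_i$ of bidegree $(-k_0,i)$ and $F-G=HD+D'H$. For homogeneous $a,b\in R$ of bidegrees $(2i,0),(2j,0)$, the Koszul factorization $K(a,b)$ is $R\{i-j\}e\oplus Rf$ with $d(e)=af$, $d(f)=be$; tensor products are over $R$ with differential $d\otimes1+1\otimes d$ and Koszul signs. Decorated diagrams. A decorated diagram $D$ of a tangle consists of a tangle diagram $D^\circ$ in a disc together with finitely many disjoint dotted arcs meeting $D^\circ$ only in their endpoints such that $D^\circ\cup(\text{arcs})$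 is connected; a labeling of each region of the complement of $D^\circ\cup(\text{arcs})$ by a distinct variable $x_1,\dots,x_m$ of bidegree $(-2,0)$; and a marked adjacent edge near each crossing and arc (only affecting signs). $R(D)\subset\mathbb Z[x_1,\dots,x_m]$ is generated by all differences $x_i-x_j$; for an oriented edge $e$, $x_e=x_\ell-x_r$ ($x_\ell,x_r$ the labels of regions to its left and right). Each crossing and each dotted arc lies in a small disc meeting the diagram in four points, with boundary-touching regions labeled $x_0,x_1,x_2,x_3$ in cyclic order; $c=x_1-x_2+x_3-x_0$. $D_0$: two strands cutting off $x_1$ and $x_3$, joined by a dotted arc separating $x_0$ from $x_2$; $D_1$: strands cutting off $x_0$ and $x_2$, arc separating $x_1$ from $x_3$. $C(D_0)=K(x_0-x_2,(x_1-x_3)c)$ (generators $e,f$), $C(D_1)=K(x_1-x_3,(x_0-x_2)c)$ (generators $e',f'$). Saddle maps: $s_{0\to1}:C(D_0)\to C(D_1)\{1\}$, $e\mapsto-f'$, $f\mapsto ce'$; $s_{1\to0}:C(D_1)\to C(D_0)\{1\}$, $e'\mapsto-f$, $f'\mapsto ce$. A crossing, labeled so that $D_0$ is its oriented resolution, gets: if positive, $C(D_0)\{1\}\oplus C(D_1)\{-1,1\}$ with $d_1=s_{0\to1}$ from first to second summand and $d_i=0$ for $i\ge2$; if negative, $C(D_1)\{1\}\oplus C(D_0)\{-1,1\}$ with $d_1=s_{1\to0}$. A dotted arc contributes $C(D_0)$. $C(D)=\bigotimes_{R(D)}(C(D_e)\otimes_{R(D_e)}R(D))$ over these elementary pieces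 $D_e$, a multifactorization of $\frac13\sum_{e\in\partial D}x_e^3$ (edges meeting the boundary, oriented inward). *)

theory Defs
  imports "HOL-Library.Poly_Mapping"
begin

type_synonym mpoly = "(nat \<Rightarrow>\<^sub>0 nat) \<Rightarrow>\<^sub>0 int"

definition Var :: "nat \<Rightarrow> mpoly" where
  "Var i = Poly_Mapping.single (Poly_Mapping.single i 1) 1"

text \<open>p is homogeneous of internal degree k (each variable has internal degree -2,
  filtration degree 0).  The zero polynomial has every degree.\<close>
definition hom_deg :: "int \<Rightarrow> mpoly \<Rightarrow> bool" where
  "hom_deg k p \<longleftrightarrow>
     (\<forall>mono\<in>Poly_Mapping.keys p. -2 * int (\<Sum>i\<in>Poly_Mapping.keys mono. Poly_Mapping.lookup mono i) = k)"

inductive_set diff_ring :: "nat \<Rightarrow> mpoly set" for m :: nat where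
  one:  "1 \<in> diff_ring m"
| diff: "i < m \<Longrightarrow> j < m \<Longrightarrow> Var i - Var j \<in> diff_ring m"
| add:  "p \<in> diff_ring m \<Longrightarrow> q \<in> diff_ring m \<Longrightarrow> p + q \<in> diff_ring m"
| neg:  "p \<in> diff_ring m \<Longrightarrow> - p \<in> diff_ring m"
| mult: "p \<in> diff_ring m \<Longrightarrow> q \<in> diff_ring m \<Longrightarrow> p * q \<in> diff_ring m"

text \<open>An elementary piece (crossing or dotted arc) sits in a small disc; the regions touching
  the boundary of that disc are labelled (by region/variable indices) r0,r1,r2,r3 in cyclic
  order.  Port k (k < 4) is the point where the diagram meets the small disc between the
  regions r_k and r_(k+1 mod 4).  For a crossing the labelling is such that D_0 (strands
  joining ports 0-1 and 2-3, cutting off r1 and r3) is the oriented resolution.\<close>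

datatype kind = PosX | NegX | Arc

datatype piece = Piece kind nat nat nat nat

fun pkind :: "piece \<Rightarrow> kind" where
  "pkind (Piece t _ _ _ _) = t"

fun preg :: "piece \<Rightarrow> nat \<Rightarrow> nat" where
  "preg (Piece _ a b c d) k = [a, b, c, d] ! (k mod 4)"

text \<open>Strand partner of a port inside a piece: at a crossing strands go straight through
  (0-2, 1-3); at a dotted arc (picture D_0) the strands join ports 0-1 and 2-3.\<close>
definition partner :: "kind \<Rightarrow> nat \<Rightarrow> nat" where
  "partner t k = (if t = Arc then [1, 0, 3, 2] ! (k mod 4) else (k + 2) mod 4)"

datatype endpt = Bdry | Port nat nat

text \<open>A diagram: number of regions (region i carries the variable x_i), the list of
  elementary pieces, and the set of oriented edges of the tangle diagram with their
  endpoints (a port of a piece, or the boundary of the big disc) and the regions on their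
  left and right.\<close>
record 'e diagram =
  nreg   :: nat
  pieces :: "piece list"
  edges  :: "'e set"
  src    :: "'e \<Rightarrow> endpt"
  tgt    :: "'e \<Rightarrow> endpt"
  lft    :: "'e \<Rightarrow> nat"
  rgt    :: "'e \<Rightarrow> nat"

definition valid_endpt :: "'e diagram \<Rightarrow> endpt \<Rightarrow> bool" where
  "valid_endpt D x \<longleftrightarrow> (case x of Bdry \<Rightarrow> True | Port p k \<Rightarrow> p < length (pieces D) \<and> k < 4)"

definition is_in :: "'e diagram \<Rightarrow> nat \<Rightarrow> nat \<Rightarrow> bool" where
  "is_in D p k \<longleftrightarrow> (\<exists>e\<in>edges D. tgt D e = Port p k)"

definition wf_diagram :: "'e diagram \<Rightarrow> bool" where
  "wf_diagram D \<longleftrightarrow>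
     finite (edges D)
   \<and> (\<forall>p < length (pieces D). \<forall>k < 4. preg (pieces D ! p) k < nreg D)
   \<and> (\<forall>e\<in>edges D. lft D e < nreg D \<and> rgt D e < nreg D
        \<and> valid_endpt D (src D e) \<and> valid_endpt D (tgt D e))
   \<comment> \<open>every port of every piece is the end of exactly one edge-end\<close>
   \<and> (\<forall>p < length (pieces D). \<forall>k < 4.
        card {e\<in>edges D. tgt D e = Port p k} + card {e\<in>edges D. src D e = Port p k} = 1)
   \<comment> \<open>regions adjacent to an edge agree with the regions adjacent to the port\<close>
   \<and> (\<forall>e\<in>edges D. \<forall>p k. tgt D e = Port p k \<longrightarrow>
        lft D e = preg (pieces D ! p) k \<and> rgt D e = preg (pieces D ! p) (Suc k))
   \<and> (\<forall>e\<in>edges D. \<forall>p k. src D e = Port p k \<longrightarrow>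
        lft D e = preg (pieces D ! p) (Suc k) \<and> rgt D e = preg (pieces D ! p) k)
   \<comment> \<open>orientations are consistent along strands through each piece\<close>
   \<and> (\<forall>p < length (pieces D). \<forall>k < 4.
        is_in D p k \<longleftrightarrow> \<not> is_in D p (partner (pkind (pieces D ! p)) k))
   \<comment> \<open>at a crossing, D_0 (joining ports 0-1 and 2-3) is the oriented resolution\<close>
   \<and> (\<forall>p < length (pieces D). pkind (pieces D ! p) \<noteq> Arc \<longrightarrow>
        (is_in D p 0 \<longleftrightarrow> \<not> is_in D p 1))"

definition next_edge :: "'e diagram \<Rightarrow> 'e \<Rightarrow> 'e \<Rightarrow> bool" where
  "next_edge D e f \<longleftrightarrow> e \<in> edges D \<and> f \<in> edges D \<and>
     (\<exists>p k. p < length (pieces D) \<and> k < 4 \<and> tgt D e = Port p k \<and>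
        src D f = Port p (partner (pkind (pieces D ! p)) k))"

definition same_strand :: "'e diagram \<Rightarrow> 'e \<Rightarrow> 'e \<Rightarrow> bool" where
  "same_strand D e f \<longleftrightarrow> (sup (next_edge D) (next_edge D)\<inverse>\<inverse>)\<^sup>*\<^sup>* e f"

definition x_edge :: "'e diagram \<Rightarrow> 'e \<Rightarrow> mpoly" where
  "x_edge D e = Var (lft D e) - Var (rgt D e)"

text \<open>Arc: C(D_0) = K(x0-x2,(x1-x3)c) with basis 0 = e, 1 = f.
  Positive crossing: C(D_0){1} + C(D_1){-1,1} with basis 0 = e, 1 = f, 2 = e', 3 = f'.
  Negative crossing: C(D_1){1} + C(D_0){-1,1} with basis 0 = e', 1 = f', 2 = e, 3 = f.\<close>

definition lsize :: "kind \<Rightarrow> nat" where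
  "lsize t = (if t = Arc then 2 else 4)"

definition lideg :: "kind \<Rightarrow> nat \<Rightarrow> int" where
  "lideg t i = (if t = Arc then [1, 0] ! i else [2, 1, 0, -1] ! i)"

definition lfilt :: "kind \<Rightarrow> nat \<Rightarrow> int" where
  "lfilt t i = (if t = Arc then 0 else [0, 0, 1, 1] ! i)"

text \<open>Local differential D = d_0 + d_1 as a matrix: ld pc i j is the coefficient of basis
  element i in D(basis element j).  Odd internal shifts negate the Koszul differentials.\<close>
definition ld :: "piece \<Rightarrow> nat \<Rightarrow> nat \<Rightarrow> mpoly" where
  "ld pc i j =
     (let V = (\<lambda>k. Var (preg pc k));
          c = V 1 - V 2 + V 3 - V 0;
          a0 = V 0 - V 2; a1 = V 1 - V 3 in
      case pkind pc of
        Arc \<Rightarrow> (if (i, j) = (1, 0) then a0 else if (i, j) = (0, 1) then a1 * c else 0)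
      | PosX \<Rightarrow>
          (if (i, j) = (1, 0) then - a0 else if (i, j) = (0, 1) then - (a1 * c)
           else if (i, j) = (3, 2) then - a1 else if (i, j) = (2, 3) then - (a0 * c)
           else if (i, j) = (3, 0) then -1 else if (i, j) = (2, 1) then c else 0)
      | NegX \<Rightarrow>
          (if (i, j) = (1, 0) then - a1 else if (i, j) = (0, 1) then - (a0 * c)
           else if (i, j) = (3, 2) then - a0 else if (i, j) = (2, 3) then - (a1 * c)
           else if (i, j) = (3, 0) then -1 else if (i, j) = (2, 1) then c else 0))"

definition cbasis :: "'e diagram \<Rightarrow> (nat \<Rightarrow> nat) set" where
  "cbasis D = {b. (\<forall>p < length (pieces D). b p < lsize (pkind (pieces D ! p)))
                 \<and> (\<forall>p \<ge> length (pieces D). b p = 0)}"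

definition ideg :: "'e diagram \<Rightarrow> (nat \<Rightarrow> nat) \<Rightarrow> int" where
  "ideg D b = (\<Sum>p<length (pieces D). lideg (pkind (pieces D ! p)) (b p))"

definition filt :: "'e diagram \<Rightarrow> (nat \<Rightarrow> nat) \<Rightarrow> int" where
  "filt D b = (\<Sum>p<length (pieces D). lfilt (pkind (pieces D ! p)) (b p))"

definition ksign :: "'e diagram \<Rightarrow> (nat \<Rightarrow> nat) \<Rightarrow> nat \<Rightarrow> mpoly" where
  "ksign D b p = (if even (\<Sum>q<p. lideg (pkind (pieces D ! q)) (b q)) then 1 else -1)"

text \<open>Matrix of the total differential of C(D): coefficient of b' in D(b).\<close>
definition dmat :: "'e diagram \<Rightarrow> (nat \<Rightarrow> nat) \<Rightarrow> (nat \<Rightarrow> nat) \<Rightarrow> mpoly" where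
  "dmat D b' b = (\<Sum>p<length (pieces D).
      if (\<forall>q. q \<noteq> p \<longrightarrow> b' q = b q) then ksign D b p * ld (pieces D ! p) (b' p) (b p) else 0)"

text \<open>Two R(D)-linear endomorphisms of C(D) given by matrices F, G (entries: coefficient of
  b' in F(b)) are n-homotopic: there is an R(D)-linear H = sum of h_i (i >= -n) where, for maps
  of internal degree deg (as maps C(D) -> C(D)), h_i has internal degree deg + 3 and filtration
  degree i, with F - G = H D + D H.\<close>
definition homotopic :: "nat \<Rightarrow> int \<Rightarrow> 'e diagram \<Rightarrow>
    ((nat \<Rightarrow> nat) \<Rightarrow> (nat \<Rightarrow> nat) \<Rightarrow> mpoly) \<Rightarrow> ((nat \<Rightarrow> nat) \<Rightarrow> (nat \<Rightarrow> nat) \<Rightarrow> mpoly) \<Rightarrow> bool" where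
  "homotopic n deg D F G \<longleftrightarrow>
     (\<exists>H. (\<forall>b'\<in>cbasis D. \<forall>b\<in>cbasis D.
             H b' b \<in> diff_ring (nreg D)
           \<and> hom_deg (ideg D b + deg + 3 - ideg D b') (H b' b)
           \<and> (H b' b \<noteq> 0 \<longrightarrow> filt D b' \<ge> filt D b - int n))
        \<and> (\<forall>b'\<in>cbasis D. \<forall>b\<in>cbasis D.
             F b' b - G b' b =
               (\<Sum>b''\<in>cbasis D. H b' b'' * dmat D b'' b + dmat D b' b'' * H b'' b)))"

definition mult_mat :: "mpoly \<Rightarrow> (nat \<Rightarrow> nat) \<Rightarrow> (nat \<Rightarrow> nat) \<Rightarrow> mpoly" where
  "mult_mat r b' b = (if b' = b then r else 0)"

end

theory Submission imports Defs "HOL-Library.FuncSet" begin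

definition gl :: "piece \<Rightarrow> mpoly" where
  "gl pc = (let V = (\<lambda>k. Var (preg pc k)) in
     case pkind pc of Arc \<Rightarrow> V 0 - V 2 | _ \<Rightarrow> V 1 - V 2 + V 3 - V 0)"

definition Hl :: "piece \<Rightarrow> nat \<Rightarrow> nat \<Rightarrow> mpoly" where
  "Hl pc i j = (let V = (\<lambda>k. Var (preg pc k)) in
     case pkind pc of Arc \<Rightarrow> (if (i, j) = (0, 1) then 1 else 0)
     | _ \<Rightarrow> (if (i, j) = (1, 2) then 1 else if (i, j) = (0, 3) then - (V 1 - V 2 + V 3 - V 0) else 0))"

lemma sum4: "(\<Sum>j<4::nat. f j) = f 0 + f 1 + f 2 + (f 3 :: 'a::comm_monoid_add)"
  by (simp add: numeral_eq_Suc lessThan_Suc ac_simps)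
lemma sum2: "(\<Sum>j<2::nat. f j) = f 0 + (f 1 :: 'a::comm_monoid_add)"
  by (simp add: numeral_eq_Suc lessThan_Suc ac_simps)
lemma lt4: "(i::nat) < 4 \<Longrightarrow> i = 0 \<or> i = 1 \<or> i = 2 \<or> i = 3" by auto
lemma lt2: "(i::nat) < 2 \<Longrightarrow> i = 0 \<or> i = 1" by auto

lemma local_arc: "i < 2 \<Longrightarrow> k < 2 \<Longrightarrow>
  (\<Sum>j<2. Hl (Piece Arc a b c d) i j * ld (Piece Arc a b c d) j k + ld (Piece Arc a b c d) i j * Hl (Piece Arc a b c d) j k)
   = (if i = k then gl (Piece Arc a b c d) else 0)"
  unfolding sum2 apply (drule lt2, drule lt2) apply (elim disjE) by (simp_all add: Hl_def ld_def gl_def)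

lemma local_pos: "i < 4 \<Longrightarrow> k < 4 \<Longrightarrow>
  (\<Sum>j<4. Hl (Piece PosX a b c d) i j * ld (Piece PosX a b c d) j k + ld (Piece PosX a b c d) i j * Hl (Piece PosX a b c d) j k)
   = (if i = k then gl (Piece PosX a b c d) else 0)"
  unfolding sum4 apply (drule lt4, drule lt4) apply (elim disjE) by (simp_all add: Hl_def ld_def gl_def algebra_simps)

lemma local_neg: "i < 4 \<Longrightarrow> k < 4 \<Longrightarrow>
  (\<Sum>j<4. Hl (Piece NegX a b c d) i j * ld (Piece NegX a b c d) j k + ld (Piece NegX a b c d) i j * Hl (Piece NegX a b c d) j k)
   = (if i = k then gl (Piece NegX a b c d) else 0)"
  unfolding sum4 apply (drule lt4, drule lt4) apply (elim disjE) by (simp_all add: Hl_def ld_def gl_def algebra_simps)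

lemma local_id:
  assumes "i < lsize (pkind pc)" "k < lsize (pkind pc)"
  shows "(\<Sum>j<lsize (pkind pc). Hl pc i j * ld pc j k + ld pc i j * Hl pc j k)
          = (if i = k then gl pc else 0)"
proof -
  obtain t a b c d where pc: "pc = Piece t a b c d" by (cases pc)
  show ?thesis using assms unfolding pc
    by (cases t) (simp_all add: lsize_def local_arc local_pos local_neg)
qed

lemma ksign_cases: "ksign D b p = 1 \<or> ksign D b p = -1"
  by (simp add: ksign_def)

lemma ksign_sq: "ksign D b p * ksign D b p = 1"
  by (simp add: ksign_def)

lemma sum_upd:
  fixes g :: "nat \<Rightarrow> nat \<Rightarrow> int"
  shows "(\<Sum>r<p. g r ((b(q:=v)) r)) = (\<Sum>r<p. g r (b r)) + (if q < p then g q v - g q (b q) else 0)"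
proof (cases "q < p")
  case True
  have "(\<Sum>r<p. g r ((b(q:=v)) r)) = g q v + (\<Sum>r\<in>{..<p}-{q}. g r ((b(q:=v)) r))"
    using True by (subst sum.remove[of _ q]) auto
  also have "(\<Sum>r\<in>{..<p}-{q}. g r ((b(q:=v)) r)) = (\<Sum>r\<in>{..<p}-{q}. g r (b r))"
    by (rule sum.cong) auto
  also have "(\<Sum>r<p. g r (b r)) = g q (b q) + (\<Sum>r\<in>{..<p}-{q}. g r (b r))"
    using True by (subst sum.remove[of _ q]) auto
  ultimately show ?thesis using True by simp
next
  case False
  then show ?thesis by (auto intro!: sum.cong)
qed

lemma ksign_upd:
  "ksign D (b(q:=v)) p =
    (if q < p \<and> odd (lideg (pkind (pieces D ! q)) v - lideg (pkind (pieces D ! q)) (b q))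
     then - ksign D b p else ksign D b p)"
  unfolding ksign_def
  using sum_upd[where g="\<lambda>r. lideg (pkind (pieces D ! r))" and p=p and b=b and q=q and v=v]
  by auto

lemma agree_upd: "\<forall>q. q \<noteq> p \<longrightarrow> b' q = b q \<Longrightarrow> b' = b(p := b' p)"
  by auto

lemma ideg_upd: "p < length (pieces D) \<Longrightarrow>
   ideg D (b(p:=v)) = ideg D b + lideg (pkind (pieces D ! p)) v - lideg (pkind (pieces D ! p)) (b p)"
  unfolding ideg_def using sum_upd[where g="\<lambda>r. lideg (pkind (pieces D ! r))" and p="length (pieces D)" and b=b and q=p and v=v]
  by simp

lemma filt_upd: "p < length (pieces D) \<Longrightarrow>
   filt D (b(p:=v)) = filt D b + lfilt (pkind (pieces D ! p)) v - lfilt (pkind (pieces D ! p)) (b p)"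
  unfolding filt_def using sum_upd[where g="\<lambda>r. lfilt (pkind (pieces D ! r))" and p="length (pieces D)" and b=b and q=p and v=v]
  by simp

lemma ld_odd: "ld pc i j \<noteq> 0 \<Longrightarrow> odd (lideg (pkind pc) i - lideg (pkind pc) j)"
  by (cases "pkind pc") (auto simp: ld_def lideg_def Let_def split: if_splits)

lemma Hl_odd: "Hl pc i j \<noteq> 0 \<Longrightarrow> odd (lideg (pkind pc) i - lideg (pkind pc) j)"
  by (cases "pkind pc") (auto simp: Hl_def lideg_def Let_def split: if_splits)

lemma finite_cbasis: "finite (cbasis D)"
proof -
  let ?n = "length (pieces D)"
  have "cbasis D \<subseteq> (\<lambda>f x. if x < ?n then f x else 0) ` (PiE {..<?n} (\<lambda>_. {..<4}))"
  proof
    fix b assume b: "b \<in> cbasis D"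
    show "b \<in> (\<lambda>f x. if x < ?n then f x else 0) ` (PiE {..<?n} (\<lambda>_. {..<4}))"
    proof
      show "b = (\<lambda>x. if x < ?n then (\<lambda>x. if x < ?n then b x else undefined) x else 0)"
        using b by (auto simp: cbasis_def not_less intro!: ext)
      show "(\<lambda>x. if x < ?n then b x else undefined) \<in> PiE {..<?n} (\<lambda>_. {..<4})"
      proof -
        have "b p < 4" if "p < ?n" for p
        proof -
          have "b p < lsize (pkind (pieces D ! p))" using b that by (auto simp: cbasis_def)
          then show ?thesis by (simp add: lsize_def split: if_splits)
        qed
        then show ?thesis by (auto simp: PiE_def extensional_def)
      qed
    qed
  qed
  then show ?thesis by (rule finite_subset) (auto intro: finite_PiE)
qed


section \<open>global homotopy\<close>

definition Dq :: "'e diagram \<Rightarrow> nat \<Rightarrow> (nat \<Rightarrow> nat) \<Rightarrow> (nat \<Rightarrow> nat) \<Rightarrow> mpoly" where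
  "Dq D q b' b = (if (\<forall>r. r \<noteq> q \<longrightarrow> b' r = b r) then ksign D b q * ld (pieces D ! q) (b' q) (b q) else 0)"

definition Hg :: "'e diagram \<Rightarrow> nat \<Rightarrow> (nat \<Rightarrow> nat) \<Rightarrow> (nat \<Rightarrow> nat) \<Rightarrow> mpoly" where
  "Hg D p b' b = (if (\<forall>r. r \<noteq> p \<longrightarrow> b' r = b r) then ksign D b p * Hl (pieces D ! p) (b' p) (b p) else 0)"

lemma dmat_Dq: "dmat D b' b = (\<Sum>q<length (pieces D). Dq D q b' b)"
  unfolding dmat_def Dq_def ..

lemma cbasis_upd: "b \<in> cbasis D \<Longrightarrow> q < length (pieces D) \<Longrightarrow> v < lsize (pkind (pieces D ! q))
  \<Longrightarrow> b(q := v) \<in> cbasis D"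
  by (auto simp: cbasis_def)

lemma cbasis_lt: "b \<in> cbasis D \<Longrightarrow> q < length (pieces D) \<Longrightarrow> b q < lsize (pkind (pieces D ! q))"
  by (auto simp: cbasis_def)

lemma sum_single:
  assumes "finite S" "t \<in> S" "\<And>x. x \<in> S \<Longrightarrow> x \<noteq> t \<Longrightarrow> F x = 0"
  shows "(\<Sum>x\<in>S. F x) = F t"
proof -
  have "(\<Sum>x\<in>S. F x) = (\<Sum>x\<in>S. if x = t then F t else 0)"
    using assms(3) by (intro sum.cong) auto
  then show ?thesis using assms by simp
qed

lemma cross:
  assumes p: "p < length (pieces D)" and q: "q < length (pieces D)" and pq: "q \<noteq> p"
    and b: "b \<in> cbasis D" and b': "b' \<in> cbasis D"
  shows "(\<Sum>b''\<in>cbasis D. Hg D p b' b'' * Dq D q b'' b + Dq D q b' b'' * Hg D p b'' b) = 0"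
proof -
  define t1 where "t1 = b(q := b' q)"
  define t2 where "t2 = b(p := b' p)"
  have t1: "t1 \<in> cbasis D" unfolding t1_def using b b' q by (intro cbasis_upd cbasis_lt) auto
  have t2: "t2 \<in> cbasis D" unfolding t2_def using b b' p by (intro cbasis_upd cbasis_lt) auto
  have S1: "(\<Sum>b''\<in>cbasis D. Hg D p b' b'' * Dq D q b'' b) = Hg D p b' t1 * Dq D q t1 b"
  proof (rule sum_single[OF finite_cbasis t1])
    fix x assume "x \<in> cbasis D" "x \<noteq> t1"
    show "Hg D p b' x * Dq D q x b = 0"
    proof (cases "\<forall>r. r \<noteq> q \<longrightarrow> x r = b r")
      case True
      with \<open>x \<noteq> t1\<close> have "x q \<noteq> b' q" unfolding t1_def by (auto simp: fun_eq_iff split: if_splits)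
      then have "Hg D p b' x = 0" using pq unfolding Hg_def by auto
      then show ?thesis by simp
    qed (auto simp: Dq_def)
  qed
  have S2: "(\<Sum>b''\<in>cbasis D. Dq D q b' b'' * Hg D p b'' b) = Dq D q b' t2 * Hg D p t2 b"
  proof (rule sum_single[OF finite_cbasis t2])
    fix x assume "x \<in> cbasis D" "x \<noteq> t2"
    show "Dq D q b' x * Hg D p x b = 0"
    proof (cases "\<forall>r. r \<noteq> p \<longrightarrow> x r = b r")
      case True
      with \<open>x \<noteq> t2\<close> have "x p \<noteq> b' p" unfolding t2_def by (auto simp: fun_eq_iff split: if_splits)
      then have "Dq D q b' x = 0" using pq unfolding Dq_def by auto
      then show ?thesis by simp
    qed (auto simp: Hg_def)
  qed
  have A: "(\<forall>r. r \<noteq> p \<longrightarrow> b' r = t1 r) \<longleftrightarrow> (\<forall>r. r \<noteq> q \<longrightarrow> b' r = t2 r)"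
    unfolding t1_def t2_def using pq by auto
  let ?h = "Hl (pieces D ! p) (b' p) (b p)"
  let ?d = "ld (pieces D ! q) (b' q) (b q)"
  have key: "Hg D p b' t1 * Dq D q t1 b + Dq D q b' t2 * Hg D p t2 b = 0"
  proof (cases "(\<forall>r. r \<noteq> q \<longrightarrow> b' r = t2 r) \<and> ?h \<noteq> 0 \<and> ?d \<noteq> 0")
    case True
    then have ag: "\<forall>r. r \<noteq> p \<longrightarrow> b' r = t1 r" "\<forall>r. r \<noteq> q \<longrightarrow> b' r = t2 r" using A by auto
    have oh: "odd (lideg (pkind (pieces D ! p)) (b' p) - lideg (pkind (pieces D ! p)) (b p))"
      using Hl_odd True by blast
    have od: "odd (lideg (pkind (pieces D ! q)) (b' q) - lideg (pkind (pieces D ! q)) (b q))"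
      using ld_odd True by blast
    have t1p: "t1 p = b p" "t1 q = b' q" using pq by (simp_all add: t1_def)
    have t2q: "t2 q = b q" "t2 p = b' p" using pq by (simp_all add: t2_def)
    have e1: "Hg D p b' t1 = ksign D t1 p * ?h" unfolding Hg_def if_P[OF ag(1)] t1p ..
    have e2: "Dq D q t1 b = ksign D b q * ?d"
    proof -
      have "\<forall>r. r \<noteq> q \<longrightarrow> t1 r = b r" by (simp add: t1_def)
      then show ?thesis unfolding Dq_def t1p by simp
    qed
    have e3: "Dq D q b' t2 = ksign D t2 q * ?d" unfolding Dq_def if_P[OF ag(2)] t2q ..
    have e4: "Hg D p t2 b = ksign D b p * ?h"
    proof -
      have "\<forall>r. r \<noteq> p \<longrightarrow> t2 r = b r" by (simp add: t2_def)
      then show ?thesis unfolding Hg_def t2q by simp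
    qed
    have k1: "ksign D t1 p = (if q < p then - ksign D b p else ksign D b p)"
      unfolding t1_def ksign_upd using od by simp
    have k2: "ksign D t2 q = (if p < q then - ksign D b q else ksign D b q)"
      unfolding t2_def ksign_upd using oh by simp
    show ?thesis
    proof (cases "q < p")
      case True
      then have "\<not> p < q" by simp
      then show ?thesis unfolding e1 e2 e3 e4 k1 k2 using True by (simp add: algebra_simps)
    next
      case False
      then have "p < q" using pq by simp
      then show ?thesis unfolding e1 e2 e3 e4 k1 k2 using False by (simp add: algebra_simps)
    qed
  next
    case False
    have t1p: "t1 p = b p" "t1 q = b' q" using pq by (simp_all add: t1_def)
    have t2q: "t2 q = b q" "t2 p = b' p" using pq by (simp_all add: t2_def)
    have z1: "Hg D p b' t1 = 0 \<or> Dq D q t1 b = 0"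
      using False A unfolding Hg_def Dq_def t1p by auto
    have z2: "Dq D q b' t2 = 0 \<or> Hg D p t2 b = 0"
      using False A unfolding Hg_def Dq_def t2q by auto
    show ?thesis using z1 z2 by auto
  qed
  show ?thesis unfolding sum.distrib S1 S2 by (rule key)
qed


lemma diag:
  assumes p: "p < length (pieces D)" and b: "b \<in> cbasis D" and b': "b' \<in> cbasis D"
  shows "(\<Sum>b''\<in>cbasis D. Hg D p b' b'' * Dq D p b'' b + Dq D p b' b'' * Hg D p b'' b)
         = (if b' = b then gl (pieces D ! p) else 0)"
proof (cases "\<forall>r. r \<noteq> p \<longrightarrow> b' r = b r")
  case False
  then have ne: "b' \<noteq> b" by auto
  have "Hg D p b' x * Dq D p x b + Dq D p b' x * Hg D p x b = 0" for x
  proof -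
    have "Hg D p b' x = 0 \<or> Dq D p x b = 0" using False unfolding Hg_def Dq_def by auto
    moreover have "Dq D p b' x = 0 \<or> Hg D p x b = 0" using False unfolding Hg_def Dq_def by auto
    ultimately show ?thesis by auto
  qed
  then show ?thesis using ne by simp
next
  case True
  let ?n = "lsize (pkind (pieces D ! p))"
  let ?F = "\<lambda>x. Hg D p b' x * Dq D p x b + Dq D p b' x * Hg D p x b"
  let ?T = "(\<lambda>j. b(p := j)) ` {..<?n}"
  have T: "?T \<subseteq> cbasis D" using b p by (auto intro: cbasis_upd)
  have "(\<Sum>x\<in>cbasis D. ?F x) = (\<Sum>x\<in>?T. ?F x)"
  proof (rule sum.mono_neutral_right[OF finite_cbasis T])
    show "\<forall>x\<in>cbasis D - ?T. ?F x = 0"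
    proof
      fix x assume x: "x \<in> cbasis D - ?T"
      have "\<not> (\<forall>r. r \<noteq> p \<longrightarrow> x r = b r)"
      proof
        assume a: "\<forall>r. r \<noteq> p \<longrightarrow> x r = b r"
        then have "x = b(p := x p)" by (auto simp: fun_eq_iff)
        moreover have "x p < ?n" using x p by (auto intro: cbasis_lt)
        ultimately show False using x by auto
      qed
      moreover have "\<not> (\<forall>r. r \<noteq> p \<longrightarrow> b' r = x r)" using calculation True by auto
      ultimately show "?F x = 0" unfolding Hg_def Dq_def by auto
    qed
  qed
  also have "\<dots> = (\<Sum>j<?n. ?F (b(p := j)))"
    by (rule sum.reindex_cong[where l="\<lambda>j. b(p := j)"]) (auto simp: inj_on_def fun_eq_iff)
  also have "\<dots> = (\<Sum>j<?n. Hl (pieces D ! p) (b' p) j * ld (pieces D ! p) j (b p)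
                    + ld (pieces D ! p) (b' p) j * Hl (pieces D ! p) j (b p))"
  proof (rule sum.cong[OF refl])
    fix j
    have ks: "ksign D (b(p := j)) p = ksign D b p" by (simp add: ksign_upd)
    have a1: "\<forall>r. r \<noteq> p \<longrightarrow> b' r = (b(p := j)) r" using True by simp
    have a2: "\<forall>r. r \<noteq> p \<longrightarrow> (b(p := j)) r = b r" by simp
    have "?F (b(p := j)) = (ksign D b p * ksign D b p) * (Hl (pieces D ! p) (b' p) j * ld (pieces D ! p) j (b p)
                    + ld (pieces D ! p) (b' p) j * Hl (pieces D ! p) j (b p))"
      unfolding Hg_def Dq_def if_P[OF a1] if_P[OF a2] ks by (simp add: algebra_simps)
    then show "?F (b(p := j)) = Hl (pieces D ! p) (b' p) j * ld (pieces D ! p) j (b p)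
                    + ld (pieces D ! p) (b' p) j * Hl (pieces D ! p) j (b p)"
      by (simp add: ksign_sq)
  qed
  also have "\<dots> = (if b' p = b p then gl (pieces D ! p) else 0)"
    by (rule local_id) (use b b' p in \<open>auto intro: cbasis_lt\<close>)
  also have "(b' p = b p) = (b' = b)" using True by (auto simp: fun_eq_iff)
  finally show ?thesis .
qed

lemma main_id:
  assumes p: "p < length (pieces D)" and b: "b \<in> cbasis D" and b': "b' \<in> cbasis D"
  shows "(\<Sum>b''\<in>cbasis D. Hg D p b' b'' * dmat D b'' b + dmat D b' b'' * Hg D p b'' b)
         = (if b' = b then gl (pieces D ! p) else 0)"
proof -
  have "(\<Sum>b''\<in>cbasis D. Hg D p b' b'' * dmat D b'' b + dmat D b' b'' * Hg D p b'' b)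
      = (\<Sum>b''\<in>cbasis D. \<Sum>q<length (pieces D). Hg D p b' b'' * Dq D q b'' b + Dq D q b' b'' * Hg D p b'' b)"
    unfolding dmat_Dq by (simp add: sum_distrib_left sum_distrib_right sum.distrib)
  also have "\<dots> = (\<Sum>q<length (pieces D). \<Sum>b''\<in>cbasis D. Hg D p b' b'' * Dq D q b'' b + Dq D q b' b'' * Hg D p b'' b)"
    by (rule sum.swap)
  also have "\<dots> = (\<Sum>q<length (pieces D). if q = p then (if b' = b then gl (pieces D ! p) else 0) else 0)"
    by (rule sum.cong[OF refl]) (use p b b' in \<open>auto simp: diag cross\<close>)
  also have "\<dots> = (if b' = b then gl (pieces D ! p) else 0)" using p by simp
  finally show ?thesis .
qed


section \<open>ring and degree conditions\<close>

lemma diff_ring_zero: "0 \<in> diff_ring m"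
proof -
  have "1 + - 1 \<in> diff_ring m" by (intro diff_ring.add diff_ring.neg diff_ring.one)
  then show ?thesis by simp
qed

lemma preg_mod: "preg pc k = preg pc (k mod 4)"
  by (cases pc) simp

lemma preg_bound: "wf_diagram D \<Longrightarrow> p < length (pieces D) \<Longrightarrow> preg (pieces D ! p) k < nreg D"
  unfolding wf_diagram_def by (subst preg_mod) auto

lemma ksign_ring: "ksign D b p \<in> diff_ring m"
  using ksign_cases[of D b p] diff_ring.neg[OF diff_ring.one, of m] diff_ring.one[of m] by auto

lemma Hl_ring:
  assumes "\<And>k. preg pc k < m"
  shows "Hl pc i j \<in> diff_ring m"
proof -
  let ?V = "\<lambda>k. Var (preg pc k)"
  have "- ((?V 1 - ?V 2) + (?V 3 - ?V 0)) \<in> diff_ring m"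
    using assms by (intro diff_ring.neg diff_ring.add diff_ring.diff) auto
  moreover have "Hl pc i j = 0 \<or> Hl pc i j = 1 \<or> Hl pc i j = - ((?V 1 - ?V 2) + (?V 3 - ?V 0))"
    by (cases "pkind pc") (auto simp: Hl_def Let_def algebra_simps)
  ultimately show ?thesis using diff_ring_zero[of m] diff_ring.one[of m] by auto
qed

lemma Hg_ring: "wf_diagram D \<Longrightarrow> p < length (pieces D) \<Longrightarrow> Hg D p b' b \<in> diff_ring (nreg D)"
  unfolding Hg_def
  by (auto simp: diff_ring_zero preg_bound intro!: diff_ring.mult ksign_ring Hl_ring)

lemma hom_deg_zero: "hom_deg k 0" by (simp add: hom_deg_def)
lemma hom_deg_one: "hom_deg 0 1" by (simp add: hom_deg_def)
lemma hom_deg_Var: "hom_deg (-2) (Var i)" by (simp add: hom_deg_def Var_def)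
lemma hom_deg_add: "hom_deg k a \<Longrightarrow> hom_deg k b \<Longrightarrow> hom_deg k (a + b)"
  unfolding hom_deg_def using keys_add[of a b] by blast
lemma hom_deg_neg: "hom_deg k a \<Longrightarrow> hom_deg k (- a)"
  unfolding hom_deg_def by simp
lemma hom_deg_diff: "hom_deg k a \<Longrightarrow> hom_deg k b \<Longrightarrow> hom_deg k (a - b)"
  unfolding hom_deg_def using keys_diff[of a b] by blast
lemma hom_deg_ksign: "hom_deg k a \<Longrightarrow> hom_deg k (ksign D b p * a)"
  using ksign_cases[of D b p] by (auto intro: hom_deg_neg)

lemma Hl_deg: "Hl pc i j \<noteq> 0 \<Longrightarrow> hom_deg (lideg (pkind pc) j + 1 - lideg (pkind pc) i) (Hl pc i j)"
  by (cases "pkind pc")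
     (auto simp: Hl_def Let_def lideg_def hom_deg_one split: if_splits
           intro!: hom_deg_neg hom_deg_add hom_deg_diff hom_deg_Var)

lemma Hl_filt: "Hl pc i j \<noteq> 0 \<Longrightarrow> lfilt (pkind pc) i \<ge> lfilt (pkind pc) j - 1"
  by (cases "pkind pc") (auto simp: Hl_def Let_def lfilt_def split: if_splits)

lemma Hg_conds:
  assumes "wf_diagram D" "p < length (pieces D)"
  shows "Hg D p b' b \<in> diff_ring (nreg D)
           \<and> hom_deg (ideg D b + (-2) + 3 - ideg D b') (Hg D p b' b)
           \<and> (Hg D p b' b \<noteq> 0 \<longrightarrow> filt D b' \<ge> filt D b - int 1)"
proof (cases "Hg D p b' b = 0")
  case True
  then show ?thesis by (simp add: hom_deg_zero diff_ring_zero)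
next
  case False
  then have ag: "\<forall>r. r \<noteq> p \<longrightarrow> b' r = b r" and h: "Hl (pieces D ! p) (b' p) (b p) \<noteq> 0"
    unfolding Hg_def by (auto split: if_splits)
  have eq: "b' = b(p := b' p)" using ag by (auto simp: fun_eq_iff)
  have i: "ideg D b' = ideg D b + lideg (pkind (pieces D ! p)) (b' p) - lideg (pkind (pieces D ! p)) (b p)"
    by (subst eq) (simp add: ideg_upd assms(2))
  have f: "filt D b' = filt D b + lfilt (pkind (pieces D ! p)) (b' p) - lfilt (pkind (pieces D ! p)) (b p)"
    by (subst eq) (simp add: filt_upd assms(2))
  have "hom_deg (ideg D b + (-2) + 3 - ideg D b') (Hl (pieces D ! p) (b' p) (b p))"
    using Hl_deg[OF h] unfolding i by (simp add: algebra_simps)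
  then have "hom_deg (ideg D b + (-2) + 3 - ideg D b') (Hg D p b' b)"
    unfolding Hg_def using ag by (simp add: hom_deg_ksign)
  moreover have "filt D b' \<ge> filt D b - int 1" using Hl_filt[OF h] unfolding f by simp
  ultimately show ?thesis using Hg_ring[OF assms] by simp
qed

abbreviation nullh :: "'e diagram \<Rightarrow> mpoly \<Rightarrow> bool" where
  "nullh D r \<equiv> homotopic 1 (-2) D (mult_mat r) (mult_mat 0)"

lemma nullh_gl:
  assumes "wf_diagram D" "p < length (pieces D)"
  shows "nullh D (gl (pieces D ! p))"
proof -
  have c1: "\<forall>b'\<in>cbasis D. \<forall>b\<in>cbasis D. Hg D p b' b \<in> diff_ring (nreg D)
           \<and> hom_deg (ideg D b + (-2) + 3 - ideg D b') (Hg D p b' b)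
           \<and> (Hg D p b' b \<noteq> 0 \<longrightarrow> filt D b' \<ge> filt D b - int 1)"
    using Hg_conds[OF assms] by blast
  have c2: "\<forall>b'\<in>cbasis D. \<forall>b\<in>cbasis D. mult_mat (gl (pieces D ! p)) b' b - mult_mat 0 b' b =
       (\<Sum>b''\<in>cbasis D. Hg D p b' b'' * dmat D b'' b + dmat D b' b'' * Hg D p b'' b)"
    using main_id[OF assms(2)] by (simp add: mult_mat_def)
  show ?thesis unfolding homotopic_def by (intro exI[of _ "Hg D p"] conjI c1 c2)
qed

lemma hom_mult_iff:
  "homotopic n deg D (mult_mat a) (mult_mat b) = homotopic n deg D (mult_mat (a - b)) (mult_mat 0)"
proof -
  have "\<And>x y. mult_mat a x y - mult_mat b x y = mult_mat (a - b) x y - mult_mat 0 x y"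
    by (simp add: mult_mat_def)
  then show ?thesis unfolding homotopic_def by simp
qed

lemma nullh_neg:
  assumes "nullh D r" shows "nullh D (- r)"
proof -
  obtain H where H1: "\<forall>b'\<in>cbasis D. \<forall>b\<in>cbasis D.
             H b' b \<in> diff_ring (nreg D)
           \<and> hom_deg (ideg D b + (-2) + 3 - ideg D b') (H b' b)
           \<and> (H b' b \<noteq> 0 \<longrightarrow> filt D b' \<ge> filt D b - int 1)"
    and H2: "\<forall>b'\<in>cbasis D. \<forall>b\<in>cbasis D.
             mult_mat r b' b - mult_mat 0 b' b =
               (\<Sum>b''\<in>cbasis D. H b' b'' * dmat D b'' b + dmat D b' b'' * H b'' b)"
    using assms unfolding homotopic_def by blast
  have c1: "\<forall>b'\<in>cbasis D. \<forall>b\<in>cbasis D. - H b' b \<in> diff_ring (nreg D)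
           \<and> hom_deg (ideg D b + (-2) + 3 - ideg D b') (- H b' b)
           \<and> (- H b' b \<noteq> 0 \<longrightarrow> filt D b' \<ge> filt D b - int 1)"
    using H1 by (auto intro: diff_ring.neg hom_deg_neg)
  have c2: "\<forall>b'\<in>cbasis D. \<forall>b\<in>cbasis D. mult_mat (- r) b' b - mult_mat 0 b' b =
       (\<Sum>b''\<in>cbasis D. (- H b' b'') * dmat D b'' b + dmat D b' b'' * (- H b'' b))"
  proof (intro ballI)
    fix b' b assume b: "b' \<in> cbasis D" "b \<in> cbasis D"
    have "mult_mat (- r) b' b - mult_mat 0 b' b = - (mult_mat r b' b - mult_mat 0 b' b)"
      by (simp add: mult_mat_def)
    also have "\<dots> = (\<Sum>b''\<in>cbasis D. (- H b' b'') * dmat D b'' b + dmat D b' b'' * (- H b'' b))"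
      using H2 b by (simp add: sum_negf[symmetric])
    finally show "mult_mat (- r) b' b - mult_mat 0 b' b =
       (\<Sum>b''\<in>cbasis D. (- H b' b'') * dmat D b'' b + dmat D b' b'' * (- H b'' b))" .
  qed
  show ?thesis unfolding homotopic_def by (intro exI[of _ "\<lambda>x y. - H x y"] conjI c1 c2)
qed

lemma nullh_add:
  assumes "nullh D r" "nullh D s" shows "nullh D (r + s)"
proof -
  obtain H where H1: "\<forall>b'\<in>cbasis D. \<forall>b\<in>cbasis D.
             H b' b \<in> diff_ring (nreg D)
           \<and> hom_deg (ideg D b + (-2) + 3 - ideg D b') (H b' b)
           \<and> (H b' b \<noteq> 0 \<longrightarrow> filt D b' \<ge> filt D b - int 1)"
    and H2: "\<forall>b'\<in>cbasis D. \<forall>b\<in>cbasis D.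
             mult_mat r b' b - mult_mat 0 b' b =
               (\<Sum>b''\<in>cbasis D. H b' b'' * dmat D b'' b + dmat D b' b'' * H b'' b)"
    using assms(1) unfolding homotopic_def by blast
  obtain K where K1: "\<forall>b'\<in>cbasis D. \<forall>b\<in>cbasis D.
             K b' b \<in> diff_ring (nreg D)
           \<and> hom_deg (ideg D b + (-2) + 3 - ideg D b') (K b' b)
           \<and> (K b' b \<noteq> 0 \<longrightarrow> filt D b' \<ge> filt D b - int 1)"
    and K2: "\<forall>b'\<in>cbasis D. \<forall>b\<in>cbasis D.
             mult_mat s b' b - mult_mat 0 b' b =
               (\<Sum>b''\<in>cbasis D. K b' b'' * dmat D b'' b + dmat D b' b'' * K b'' b)"
    using assms(2) unfolding homotopic_def by blast
  have c1: "\<forall>b'\<in>cbasis D. \<forall>b\<in>cbasis D. H b' b + K b' b \<in> diff_ring (nreg D)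
           \<and> hom_deg (ideg D b + (-2) + 3 - ideg D b') (H b' b + K b' b)
           \<and> (H b' b + K b' b \<noteq> 0 \<longrightarrow> filt D b' \<ge> filt D b - int 1)"
  proof (intro ballI conjI impI)
    fix b' b assume b: "b' \<in> cbasis D" "b \<in> cbasis D"
    show "H b' b + K b' b \<in> diff_ring (nreg D)" using H1 K1 b by (auto intro: diff_ring.add)
    show "hom_deg (ideg D b + (-2) + 3 - ideg D b') (H b' b + K b' b)"
      using H1 K1 b by (auto intro: hom_deg_add)
    assume "H b' b + K b' b \<noteq> 0"
    then have "H b' b \<noteq> 0 \<or> K b' b \<noteq> 0" by auto
    then show "filt D b' \<ge> filt D b - int 1" using H1 K1 b by auto
  qed
  have c2: "\<forall>b'\<in>cbasis D. \<forall>b\<in>cbasis D. mult_mat (r + s) b' b - mult_mat 0 b' b =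
       (\<Sum>b''\<in>cbasis D. (H b' b'' + K b' b'') * dmat D b'' b + dmat D b' b'' * (H b'' b + K b'' b))"
  proof (intro ballI)
    fix b' b assume b: "b' \<in> cbasis D" "b \<in> cbasis D"
    have "mult_mat (r + s) b' b - mult_mat 0 b' b = (mult_mat r b' b - mult_mat 0 b' b) + (mult_mat s b' b - mult_mat 0 b' b)"
      by (simp add: mult_mat_def)
    also have "\<dots> = (\<Sum>b''\<in>cbasis D. (H b' b'' + K b' b'') * dmat D b'' b + dmat D b' b'' * (H b'' b + K b'' b))"
      using H2 K2 b by (simp add: sum.distrib[symmetric] algebra_simps)
    finally show "mult_mat (r + s) b' b - mult_mat 0 b' b =
       (\<Sum>b''\<in>cbasis D. (H b' b'' + K b' b'') * dmat D b'' b + dmat D b' b'' * (H b'' b + K b'' b))" .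
  qed
  show ?thesis unfolding homotopic_def by (intro exI[of _ "\<lambda>x y. H x y + K x y"] conjI c1 c2)
qed

lemma nullh_zero: "nullh D 0"
  unfolding homotopic_def
  by (intro exI[of _ "\<lambda>x y. 0"]) (simp add: diff_ring_zero hom_deg_zero mult_mat_def)


lemma edge_step_local:
  assumes "k < 4"
  shows "(Var (preg pc k) - Var (preg pc (Suc k)))
         - (Var (preg pc (Suc (partner (pkind pc) k))) - Var (preg pc (partner (pkind pc) k))) = gl pc
       \<or> (Var (preg pc k) - Var (preg pc (Suc k)))
         - (Var (preg pc (Suc (partner (pkind pc) k))) - Var (preg pc (partner (pkind pc) k))) = - gl pc"
proof -
  obtain t a b c d where pc: "pc = Piece t a b c d" by (cases pc)
  have "k = 0 \<or> k = 1 \<or> k = 2 \<or> k = 3" using assms by auto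
  then show ?thesis unfolding pc
    by (cases t; elim disjE; simp add: partner_def gl_def algebra_simps)
qed

lemma edge_step:
  assumes wf: "wf_diagram D" and n: "next_edge D e f"
  shows "\<exists>p<length (pieces D). x_edge D e - x_edge D f = gl (pieces D ! p)
                             \<or> x_edge D e - x_edge D f = - gl (pieces D ! p)"
proof -
  from n obtain p k where e: "e \<in> edges D" and f: "f \<in> edges D" and p: "p < length (pieces D)"
    and k: "k < 4" and te: "tgt D e = Port p k"
    and sf: "src D f = Port p (partner (pkind (pieces D ! p)) k)"
    unfolding next_edge_def by blast
  from wf e te have le: "lft D e = preg (pieces D ! p) k" "rgt D e = preg (pieces D ! p) (Suc k)"
    unfolding wf_diagram_def by blast+
  from wf f sf have lf: "lft D f = preg (pieces D ! p) (Suc (partner (pkind (pieces D ! p)) k))"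
      "rgt D f = preg (pieces D ! p) (partner (pkind (pieces D ! p)) k)"
    unfolding wf_diagram_def by blast+
  show ?thesis using p edge_step_local[OF k, of "pieces D ! p"]
    unfolding x_edge_def le lf by blast
qed

lemma nullh_step:
  assumes wf: "wf_diagram D" and n: "next_edge D e f"
  shows "nullh D (x_edge D e - x_edge D f)"
proof -
  obtain p where p: "p < length (pieces D)" and
    d: "x_edge D e - x_edge D f = gl (pieces D ! p) \<or> x_edge D e - x_edge D f = - gl (pieces D ! p)"
    using edge_step[OF assms] by blast
  show ?thesis using d nullh_gl[OF wf p] nullh_neg[OF nullh_gl[OF wf p]] by auto
qed

theorem lemma4p2:
  fixes D :: "'e diagram" and e f :: 'e
  assumes "wf_diagram D"
    and "e \<in> edges D" and "f \<in> edges D"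
    and "same_strand D e f"
  shows "homotopic 1 (-2) D (mult_mat (x_edge D e)) (mult_mat (x_edge D f))"
proof -
  have "(sup (next_edge D) (next_edge D)\<inverse>\<inverse>)\<^sup>*\<^sup>* e f" using assms(4) unfolding same_strand_def .
  then have "nullh D (x_edge D e - x_edge D f)"
  proof (induction rule: rtranclp_induct)
    case base
    then show ?case using nullh_zero[of D] by simp
  next
    case (step y z)
    have "nullh D (x_edge D y - x_edge D z)"
    proof (cases "next_edge D y z")
      case True
      then show ?thesis by (rule nullh_step[OF assms(1)])
    next
      case False
      then have "next_edge D z y" using step(2) by auto
      from nullh_neg[OF nullh_step[OF assms(1) this]] show ?thesis by simp
    qed
    from nullh_add[OF step(3) this] show ?case by simp
  qed
  then show ?thesis by (subst hom_mult_iff)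
qed

end
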